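(* Let $L$ be a free abelian group of rank $n$ and take $A=\mathbb{C}$. The pro-bundle $\mathcal{L}\mathrm{og}^\infty$ admits a unique continuous multiplicative trivialization $\varrho_{\mathrm{cont}}$ on $T$. The section $\varrho_{\mathrm{cont}}$ is $C^\infty$, is compatible with multiplication by $N$, and satisfies $\nabla(\varrho_{\mathrm{cont}})=-\kappa\,\varrho_{\mathrm{cont}}$. In particular $\varrho_{\mathrm{cont}}|_{T^{\mathrm{tors}}}=\varrho_{\mathrm{can}}$.
   Context: $R$ is the completion of $\mathbb{C}[L]$ (basis $\delta_\ell$) at its augmentation ideal $I$, identified with $\widehat{\mathrm{Sym}}\,L_{\mathbb{C}}$ via $\delta_\ell\mapsto\sum_k\ell^k/k!$. $V=\mathbb{R}\otimes L$, $T=V/L$. The logarithm sheaf $\mathcal{L}\mathrm{og}$ is the local system on $T$ whose sections over $U$ are the locally constant $f:\pi^{-1}(U)\to R$ with $f(v+\ell)=\delta_\ell^{-1}f(v)$. $\mathcal{L}\mathrm{og}^\infty$ is the inverse system of $C^\infty$ vector bundles associated to the local systems $\mathcal{L}\mathrm{og}/I^{k+1}\mathcal{L}\mathrm{og}$, with flat connection $\nabla$. With $x_1,\dots,x_n$ the coordinates dual to a basis $\ell_1,\dots,\ell_n$ of $L$, $\kappa=\sum_jdx_j\otimes\ell_j$ is an $R$-valued 1-form on $T$, independent of the basis. There is a unique isomorphism $\mathrm{pr}_1^*\mathcal{L}\mathrm{og}\otimes_{\underline R}\mathrm{pr}_2^*\mathcal{L}\mathrm{og}\cong+^*\mathcal{L}\mathrm{og}$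 sending $1\otimes1\mapsto1$ at the origin. A multiplicative trivialization over a subgroup $H\subset T$ is a family of generators $1_h\in\mathcal{L}\mathrm{og}_h$ ($h\in H$) with $1_h\equiv1\bmod I$ and $1_h\otimes1_{h'}\mapsto1_{h+h'}$; it is continuous on $T$ if $t\mapsto1_t$ is a continuous section of each $\mathcal{L}\mathrm{og}/I^{k+1}\mathcal{L}\mathrm{og}$. Compatibility with multiplication by $N$ means that the map $\mathcal{L}\mathrm{og}\to[N]^*\mathcal{L}\mathrm{og}$ induced by $\delta_\ell\mapsto\delta_{N\ell}$ sends $1_t$ to $1_{Nt}$. $T^{\mathrm{tors}}$ is the torsion subgroup of $T$, and $\varrho_{\mathrm{can}}$ is the unique multiplicative trivialization of $\mathcal{L}\mathrm{og}$ over $T^{\mathrm{tors}}$. *)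

theory Defs
  imports "HOL-Analysis.Analysis"
begin

text \<open>
  The lattice L is taken to be the integer points of V, where
  V = real^'n (the finite type 'n indexes the standard basis l_1,...,l_n of L,
  so rank L = CARD('n)).  T = V/L.  The coordinates x_j are v $ j.

  The ring R = completion of C[L] at the augmentation ideal is identified (as in
  the paper) with the completed symmetric algebra of L_C, i.e. formal power
  series in the basis elements l_1..l_n: an element is its coefficient family
  indexed by multi-indices 'n => nat.  Under this identification
  delta_l = exp(l) = sum_k l^k/k!, whose coefficient at alpha is
  prod_j l_j^(alpha_j)/alpha_j!.  The ideal I^(k+1) consists of the series with
  vanishing coefficients in total degree <= k, so R/I^(k+1) is the finite
  dimensional quotient given by the coefficients of degree <= k.
\<close>

type_synonym 'n rser = "('n \<Rightarrow> nat) \<Rightarrow> complex"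

definition latt :: "(real^'n) set" where
  "latt = {v. \<forall>i. v $ i \<in> \<int>}"

definition rmult :: "'n::finite rser \<Rightarrow> 'n rser \<Rightarrow> 'n rser" where
  "rmult f g = (\<lambda>a. \<Sum>b\<in>{b. \<forall>i. b i \<le> a i}. f b * g (\<lambda>i. a i - b i))"

definition delta :: "real^'n::finite \<Rightarrow> 'n rser" where
  "delta l = (\<lambda>a. \<Prod>i\<in>UNIV. complex_of_real ((l $ i) ^ (a i) / fact (a i)))"

definition lbas :: "'n \<Rightarrow> 'n rser" where
  "lbas j = (\<lambda>a. if a = (\<lambda>i. if i = j then 1 else 0) then 1 else 0)"

text \<open>The continuous ring endomorphism of R induced by delta_l |-> delta_(N l):
  on the power series side it is l |-> N l, i.e. multiplies degree-d coefficients
  by N^d.\<close>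
definition mulN :: "nat \<Rightarrow> 'n::finite rser \<Rightarrow> 'n rser" where
  "mulN N f = (\<lambda>a. of_nat N ^ (\<Sum>i\<in>UNIV. a i) * f a)"

text \<open>
  Sections of Log over T are described on the universal cover V: a fibre element
  1_t (t = class of v) is a function g on v + L with g(v + l) = delta_l^-1 g(v);
  a family (1_t) over a subgroup H of T is therefore the same as a function
  F on the preimage of H with F(v + l) = delta_(-l) F(v) (F(v) = 1_t(v)).
  The isomorphism pr_1^*Log (x) pr_2^*Log = +^*Log sends g (x) g' to
  h(u + u') = g(u) g'(u'), so multiplicativity reads F(v + w) = F(v) F(w).
  1_t = 1 mod I means the constant coefficient is 1.
\<close>
definition mult_triv_on :: "(real^'n) set \<Rightarrow> (real^'n \<Rightarrow> 'n::finite rser) \<Rightarrow> bool" where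
  "mult_triv_on H F \<longleftrightarrow>
     (\<forall>v\<in>H. \<forall>l\<in>latt. F (v + l) = rmult (delta (- l)) (F v)) \<and>
     (\<forall>v\<in>H. F v (\<lambda>i. 0) = 1) \<and>
     (\<forall>v\<in>H. \<forall>w\<in>H. F (v + w) = rmult (F v) (F w))"

text \<open>Preimage in V of the torsion subgroup of T.\<close>
definition tors_lift :: "(real^'n) set" where
  "tors_lift = {v. \<exists>m::nat. m > 0 \<and> of_nat m *\<^sub>R v \<in> latt}"

text \<open>Continuity of t |-> 1_t as a section of each Log/I^(k+1): in the local
  trivialisations given by local lifts of T, this is continuity of every
  coefficient of F on V.\<close>
definition cont_triv :: "(real^'n \<Rightarrow> 'n::finite rser) \<Rightarrow> bool" where
  "cont_triv F \<longleftrightarrow> (\<forall>a. continuous_on UNIV (\<lambda>v. F v a))"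

primrec Ck :: "nat \<Rightarrow> (real^'n::finite \<Rightarrow> complex) \<Rightarrow> bool" where
  "Ck 0 f = continuous_on UNIV f"
| "Ck (Suc k) f = (\<exists>f'. (\<forall>v. (f has_derivative f' v) (at v)) \<and> (\<forall>h. Ck k (\<lambda>v. f' v h)))"

definition Cinf :: "(real^'n::finite \<Rightarrow> complex) \<Rightarrow> bool" where
  "Cinf f \<longleftrightarrow> (\<forall>k. Ck k f)"

end

theory Submission imports Defs "HOL-Library.FuncSet" begin

lemma box_eq: "{b::'n::finite\<Rightarrow>nat. \<forall>i. b i \<le> a i} = PiE UNIV (\<lambda>i. {..a i})"
  by (auto simp: PiE_def Pi_def extensional_def)

lemma finite_box: "finite {b::'n::finite\<Rightarrow>nat. \<forall>i. b i \<le> a i}"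
  unfolding box_eq by (rule finite_PiE) auto

lemma binom_fact: "(x+y::real)^n / fact n = (\<Sum>k\<le>n. x^k / fact k * (y^(n-k) / fact (n-k)))"
proof -
  have "(x+y)^n / fact n = (\<Sum>k\<le>n. of_nat (n choose k) * x^k * y^(n-k)) / fact n"
    by (simp add: binomial_ring)
  also have "\<dots> = (\<Sum>k\<le>n. of_nat (n choose k) * x^k * y^(n-k) / fact n)"
    by (simp add: sum_divide_distrib)
  also have "\<dots> = (\<Sum>k\<le>n. x^k / fact k * (y^(n-k) / fact (n-k)))"
  proof (rule sum.cong[OF refl])
    fix k assume "k \<in> {..n}"
    then have "real (n choose k) = fact n / (fact k * fact (n-k))"
      by (simp add: binomial_fact)
    then show "of_nat (n choose k) * x^k * y^(n-k) / fact n = x^k / fact k * (y^(n-k) / fact (n-k))"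
      by (simp add: field_simps)
  qed
  finally show ?thesis .
qed

lemma delta_add: "delta (x + y) = rmult (delta x) (delta (y::real^'n::finite))"
proof
  fix a :: "'n \<Rightarrow> nat"
  have "rmult (delta x) (delta y) a =
     (\<Sum>b\<in>PiE UNIV (\<lambda>i. {..a i}). \<Prod>i\<in>UNIV. complex_of_real ((x$i)^(b i) / fact (b i) * ((y$i)^(a i - b i) / fact (a i - b i))))"
    unfolding rmult_def delta_def box_eq
    by (rule sum.cong[OF refl]) (simp add: prod.distrib[symmetric])
  also have "\<dots> = (\<Prod>i\<in>UNIV. \<Sum>k\<in>{..a i}. complex_of_real ((x$i)^k / fact k * ((y$i)^(a i - k) / fact (a i - k))))"
    by (rule prod_sum_PiE[symmetric]) auto
  also have "\<dots> = delta (x+y) a"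
    unfolding delta_def by (simp add: binom_fact)
  finally show "delta (x + y) a = rmult (delta x) (delta y) a" by simp
qed

definition deg :: "('n::finite \<Rightarrow> nat) \<Rightarrow> nat" where "deg a = (\<Sum>i\<in>UNIV. a i)"

lemma deg_less1: "\<forall>i. b i \<le> a i \<Longrightarrow> b \<noteq> a \<Longrightarrow> deg b < deg (a::'n::finite\<Rightarrow>nat)"
  unfolding deg_def
  by (rule sum_strict_mono_ex1) (auto simp: fun_eq_iff dest!: le_neq_implies_less)

lemma deg_less2: "\<forall>i. b i \<le> a i \<Longrightarrow> b \<noteq> (\<lambda>i. 0) \<Longrightarrow> deg (\<lambda>i. a i - b i) < deg (a::'n::finite\<Rightarrow>nat)"
proof -
  assume h: "\<forall>i. b i \<le> a i" "b \<noteq> (\<lambda>i. 0)"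
  then obtain j where "b j \<noteq> 0" by auto
  moreover have "b j \<le> a j" using h by auto
  ultimately have "a j - b j < a j" by linarith
  with h show ?thesis unfolding deg_def
    by (intro sum_strict_mono_ex1) auto
qed

lemma rmult_diff:
  fixes X Y X' Y' :: "'n::finite rser"
  assumes a0: "a \<noteq> (\<lambda>i. 0)"
    and lo: "\<And>b. deg b < deg a \<Longrightarrow> X b = X' b \<and> Y b = Y' b"
    and c: "X (\<lambda>i. 0) = 1" "X' (\<lambda>i. 0) = 1" "Y (\<lambda>i. 0) = 1" "Y' (\<lambda>i. 0) = 1"
  shows "rmult X Y a - rmult X' Y' a = (X a - X' a) + (Y a - Y' a)"
proof -
  let ?B = "{b. \<forall>i. b i \<le> a i}"
  let ?g = "\<lambda>b. X b * Y (\<lambda>i. a i - b i) - X' b * Y' (\<lambda>i. a i - b i)"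
  have fin: "finite ?B" by (rule finite_box)
  have "rmult X Y a - rmult X' Y' a = sum ?g ?B"
    unfolding rmult_def by (simp add: sum_subtractf)
  also have "\<dots> = ?g a + sum ?g (?B - {a})"
    using fin by (subst sum.remove[of _ a]) auto
  also have "sum ?g (?B - {a}) = ?g (\<lambda>i. 0) + sum ?g (?B - {a} - {\<lambda>i. 0})"
    using fin a0 by (subst sum.remove[of _ "\<lambda>i. 0"]) auto
  also have "sum ?g (?B - {a} - {\<lambda>i. 0}) = 0"
  proof (rule sum.neutral, rule ballI)
    fix b assume b: "b \<in> ?B - {a} - {\<lambda>i. 0}"
    then have "deg b < deg a" "deg (\<lambda>i. a i - b i) < deg a"
      using deg_less1 deg_less2 by auto
    then show "?g b = 0" using lo by auto
  qed
  finally show ?thesis using c by (simp add: algebra_simps)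
qed

lemma delta0: "delta x (\<lambda>i. 0) = 1"
  by (simp add: delta_def)

lemma agree:
  fixes G F :: "real^'n::finite \<Rightarrow> 'n rser"
  assumes G: "mult_triv_on S G" and F: "mult_triv_on S F"
    and Q: "\<And>a. Q (\<lambda>v. G v a - F v a)"
    and Z: "\<And>D. Q D \<Longrightarrow> (\<forall>v\<in>S. \<forall>w\<in>S. D (v+w) = D v + D w) \<Longrightarrow>
             (\<forall>v\<in>S. \<forall>l\<in>(latt::(real^'n) set). D (v+l) = D v) \<Longrightarrow> (\<forall>v\<in>S. D v = 0)"
  shows "\<forall>v\<in>S. G v = F v"
proof -
  have main: "\<forall>v\<in>S. G v a = F v a" for a
  proof (induct "deg a" arbitrary: a rule: less_induct)
    case less
    show ?case
    proof (cases "a = (\<lambda>i. 0)")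
      case True
      then show ?thesis using G F by (simp add: mult_triv_on_def)
    next
      case a0: False
      let ?D = "\<lambda>v. G v a - F v a"
      have lo: "\<And>v b. v \<in> S \<Longrightarrow> deg b < deg a \<Longrightarrow> G v b = F v b" using less by blast
      have c: "\<And>v. v \<in> S \<Longrightarrow> G v (\<lambda>i. 0) = 1 \<and> F v (\<lambda>i. 0) = 1"
        using G F by (simp add: mult_triv_on_def)
      have add: "\<forall>v\<in>S. \<forall>w\<in>S. ?D (v+w) = ?D v + ?D w"
      proof (intro ballI)
        fix v w assume v: "v \<in> S" and w: "w \<in> S"
        have "?D (v+w) = rmult (G v) (G w) a - rmult (F v) (F w) a"
          using G F v w by (simp add: mult_triv_on_def)
        also have "\<dots> = ?D v + ?D w"
          by (rule rmult_diff[OF a0]) (use lo v w c in auto)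
        finally show "?D (v+w) = ?D v + ?D w" .
      qed
      have per: "\<forall>v\<in>S. \<forall>l\<in>(latt::(real^'n) set). ?D (v+l) = ?D v"
      proof (intro ballI)
        fix v and l :: "real^'n" assume v: "v \<in> S" and l: "l \<in> latt"
        have "?D (v+l) = rmult (delta (-l)) (G v) a - rmult (delta (-l)) (F v) a"
          using G F v l by (simp add: mult_triv_on_def)
        also have "\<dots> = (delta (-l) a - delta (-l) a) + ?D v"
          by (rule rmult_diff[OF a0]) (use lo v c delta0 in auto)
        finally show "?D (v+l) = ?D v" by simp
      qed
      show ?thesis using Z[OF Q add per] by simp
    qed
  qed
  show ?thesis using main by (auto simp: fun_eq_iff)
qed

lemma latt_add: "x \<in> latt \<Longrightarrow> y \<in> latt \<Longrightarrow> x + y \<in> latt"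
  by (auto simp: latt_def)

lemma latt_0: "0 \<in> latt"
  by (auto simp: latt_def)

lemma latt_scale: "x \<in> latt \<Longrightarrow> of_nat k *\<^sub>R x \<in> latt"
  by (auto simp: latt_def)

lemma additive_scale:
  fixes v :: "'a::real_vector"
  assumes add: "\<forall>v\<in>S. \<forall>w\<in>S. D (v+w) = D v + (D w :: complex)"
    and closed: "\<And>k. of_nat k *\<^sub>R v \<in> S"
  shows "D (of_nat k *\<^sub>R v) = of_nat k * D v"
proof (induct k)
  case 0
  have z: "0 \<in> S" using closed[of 0] by simp
  have "D (0 + 0) = D 0 + D 0" using add z by blast
  then have "D 0 = 0" by simp
  then show ?case by simp
next
  case (Suc k)
  have "D (of_nat (Suc k) *\<^sub>R v) = D (of_nat k *\<^sub>R v + of_nat 1 *\<^sub>R v)"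
    by (simp add: algebra_simps)
  also have "\<dots> = D (of_nat k *\<^sub>R v) + D (of_nat 1 *\<^sub>R v)"
    using add closed by blast
  finally show ?case using Suc by (simp add: algebra_simps)
qed

lemma zero_tors:
  fixes D :: "real^'n::finite \<Rightarrow> complex"
  assumes add: "\<forall>v\<in>tors_lift. \<forall>w\<in>tors_lift. D (v+w) = D v + D w"
    and per: "\<forall>v\<in>tors_lift. \<forall>l\<in>(latt::(real^'n) set). D (v+l) = D v"
  shows "\<forall>v\<in>tors_lift. D v = 0"
proof
  fix v :: "real^'n" assume "v \<in> tors_lift"
  then obtain m :: nat where m: "m > 0" "of_nat m *\<^sub>R v \<in> latt" by (auto simp: tors_lift_def)
  have closed: "of_nat k *\<^sub>R v \<in> tors_lift" for k
    unfolding tors_lift_def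
  proof (intro CollectI exI conjI)
    show "m > 0" by fact
    have "of_nat m *\<^sub>R (of_nat k *\<^sub>R v) = of_nat k *\<^sub>R (of_nat m *\<^sub>R v)"
      by (simp add: algebra_simps)
    then show "of_nat m *\<^sub>R (of_nat k *\<^sub>R v) \<in> latt" using latt_scale[OF m(2), of k] by (simp add: mult.commute)
  qed
  have z0: "(0::real^'n) \<in> tors_lift"
    unfolding tors_lift_def by (auto intro!: exI[of _ 1] simp: latt_0)
  have "D (of_nat m *\<^sub>R v) = of_nat m * D v"
    by (rule additive_scale[OF add closed])
  moreover have "D (0 + of_nat m *\<^sub>R v) = D 0"
    using per z0 m(2) by blast
  moreover have "D 0 = 0"
  proof -
    have "D (0 + 0) = D 0 + D 0" using add z0 by blast
    then show ?thesis by simp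
  qed
  ultimately show "D v = 0" using m(1) by simp
qed

lemma zero_cont:
  fixes D :: "real^'n::finite \<Rightarrow> complex"
  assumes cont: "continuous_on UNIV D"
    and add: "\<forall>v\<in>UNIV. \<forall>w\<in>UNIV. D (v+w) = D v + D w"
    and per: "\<forall>v\<in>UNIV. \<forall>l\<in>(latt::(real^'n) set). D (v+l) = D v"
  shows "\<forall>v\<in>UNIV. D v = 0"
proof -
  have "compact (D ` cbox 0 1)"
    by (rule compact_continuous_image) (use cont continuous_on_subset in auto)
  then obtain B where B: "\<And>x. x \<in> D ` cbox 0 1 \<Longrightarrow> norm x \<le> B"
    using compact_imp_bounded bounded_iff by metis
  have bnd: "norm (D v) \<le> B" for v
  proof -
    define fl :: "real^'n" where "fl = (\<chi> i. of_int \<lfloor>v$i\<rfloor>)"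
    have fl: "fl \<in> latt" by (auto simp: fl_def latt_def)
    have "v - fl \<in> cbox 0 1"
      by (auto simp: mem_box_cart fl_def) linarith+
    moreover have "D (v - fl + fl) = D (v - fl)" using per fl by blast
    ultimately show ?thesis using B by force
  qed
  show ?thesis
  proof
    fix v :: "real^'n"
    show "D v = 0"
    proof (rule ccontr)
      assume ne: "D v \<noteq> 0"
      obtain m :: nat where m: "B / norm (D v) < m" using reals_Archimedean2 by blast
      have "norm (D (of_nat m *\<^sub>R v)) = of_nat m * norm (D v)"
        using additive_scale[OF add, of v m] by (simp add: norm_mult)
      with bnd[of "of_nat m *\<^sub>R v"] have "of_nat m * norm (D v) \<le> B" by simp
      with m ne show False by (simp add: field_simps)
    qed
  qed
qed

lemma factor_deriv:
  "((\<lambda>w::real^'n::finite. complex_of_real ((- w$i)^k / fact k)) has_derivative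
     (\<lambda>h. complex_of_real (- (of_nat k * (- v$i)^(k-1) * h$i) / fact k))) (at v)"
proof -
  have d1: "((\<lambda>w::real^'n. w$i) has_derivative (\<lambda>h. h$i)) (at v)"
    by (rule bounded_linear_imp_has_derivative) (rule bounded_linear_vec_nth)
  have d2: "((\<lambda>w::real^'n. (- w$i)^k / fact k) has_derivative (\<lambda>h. - (of_nat k * (- v$i)^(k-1) * h$i) / fact k)) (at v)"
    by (rule derivative_eq_intros d1 refl | simp)+ (simp add: fun_eq_iff algebra_simps)
  show ?thesis by (rule has_derivative_of_real[OF d2])
qed
lemma rmult_lbas: "rmult (lbas j) X a =
   (if 1 \<le> a j then X (\<lambda>i. a i - (if i = j then 1 else 0)) else 0)"
proof -
  let ?e = "\<lambda>i. if i = j then 1 else (0::nat)"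
  have "rmult (lbas j) X a = (\<Sum>b\<in>{b. \<forall>i. b i \<le> a i}. if b = ?e then X (\<lambda>i. a i - ?e i) else 0)"
    unfolding rmult_def lbas_def by (rule sum.cong) auto
  also have "\<dots> = (if ?e \<in> {b. \<forall>i. b i \<le> a i} then X (\<lambda>i. a i - ?e i) else 0)"
    by (simp add: finite_box)
  also have "(?e \<in> {b. \<forall>i. b i \<le> a i}) = (1 \<le> a j)" by auto
  finally show ?thesis by (simp add: if_distrib cong: if_cong)
qed

lemma fact_div: "1 \<le> k \<Longrightarrow> real k / fact k = 1 / fact (k - 1)"
proof -
  assume "1 \<le> k"
  then obtain n where k: "k = Suc n" by (cases k) auto
  have "fact (Suc n) = real (Suc n) * fact n" by (rule fact_Suc)
  then show ?thesis unfolding k by simp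
qed

lemma F_deriv:
  fixes v :: "real^'n::finite"
  shows "((\<lambda>w. delta (-w) a) has_derivative
     (\<lambda>h. \<Sum>j\<in>UNIV. complex_of_real (h $ j) * (- rmult (lbas j) (delta (-v)) a))) (at v)"
proof -
  let ?f = "\<lambda>i (w::real^'n). complex_of_real ((- w$i)^(a i) / fact (a i))"
  let ?f' = "\<lambda>i (h::real^'n). complex_of_real (- (of_nat (a i) * (- v$i)^(a i - 1) * h$i) / fact (a i))"
  have eq: "(\<lambda>w. delta (-w) a) = (\<lambda>w. \<Prod>i\<in>UNIV. ?f i w)"
    by (simp add: delta_def fun_eq_iff)
  have "((\<lambda>w. \<Prod>i\<in>UNIV. ?f i w) has_derivative
          (\<lambda>h. \<Sum>i\<in>UNIV. ?f' i h * (\<Prod>j\<in>UNIV - {i}. ?f j v))) (at v)"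
    by (rule has_derivative_prod) (rule factor_deriv)
  then show ?thesis unfolding eq
  proof (rule has_derivative_eq_rhs)
    show "(\<lambda>h. \<Sum>i\<in>UNIV. ?f' i h * (\<Prod>j\<in>UNIV - {i}. ?f j v)) =
      (\<lambda>h. \<Sum>j\<in>UNIV. complex_of_real (h $ j) * (- rmult (lbas j) (delta (-v)) a))"
    proof (rule ext, rule sum.cong[OF refl])
      fix h :: "real^'n" and i
      show "?f' i h * (\<Prod>j\<in>UNIV - {i}. ?f j v) = complex_of_real (h $ i) * (- rmult (lbas i) (delta (-v)) a)"
      proof (cases "a i = 0")
        case True
        then show ?thesis by (simp add: rmult_lbas)
      next
        case False
        let ?a' = "\<lambda>k. a k - (if k = i then 1 else 0)"
        have "delta (-v) ?a' = complex_of_real ((- v$i)^(a i - 1) / fact (a i - 1)) *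
               (\<Prod>j\<in>UNIV - {i}. complex_of_real ((- v$j)^(?a' j) / fact (?a' j)))"
          unfolding delta_def by (subst prod.remove[of _ i]) auto
        also have "(\<Prod>j\<in>UNIV - {i}. complex_of_real ((- v$j)^(?a' j) / fact (?a' j))) =
                   (\<Prod>j\<in>UNIV - {i}. ?f j v)"
          by (rule prod.cong) auto
        finally have d: "delta (-v) ?a' = complex_of_real ((- v$i)^(a i - 1) / fact (a i - 1)) *
               (\<Prod>j\<in>UNIV - {i}. ?f j v)" .
        have fi: "?f' i h = - complex_of_real (h$i) * complex_of_real ((- v$i)^(a i - 1) / fact (a i - 1))"
        proof -
          have "- (of_nat (a i) * (- v$i)^(a i - 1) * h$i) / fact (a i) =
                - (h$i) * ((- v$i)^(a i - 1) * (real (a i) / fact (a i)))"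
            by (simp add: field_simps)
          also have "\<dots> = - (h$i) * ((- v$i)^(a i - 1) / fact (a i - 1))"
            using False by (simp add: fact_div)
          finally show ?thesis by simp
        qed
        have r: "rmult (lbas i) (delta (-v)) a = delta (-v) ?a'" using False by (simp add: rmult_lbas)
        show ?thesis unfolding fi r d by (simp only: mult_minus_left mult_minus_right mult.assoc)
      qed
    qed
  qed
qed
lemma Ck_add: "Ck k f \<Longrightarrow> Ck k g \<Longrightarrow> Ck k (\<lambda>v. f v + g v)"
proof (induct k arbitrary: f g)
  case 0
  then show ?case by (auto intro: continuous_on_add)
next
  case (Suc k)
  from Suc.prems obtain f' g' where f: "\<forall>v. (f has_derivative f' v) (at v)" "\<forall>h. Ck k (\<lambda>v. f' v h)"
    and g: "\<forall>v. (g has_derivative g' v) (at v)" "\<forall>h. Ck k (\<lambda>v. g' v h)" by auto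
  show ?case
    unfolding Ck.simps by (rule exI[of _ "\<lambda>v h. f' v h + g' v h"]) (use f g Suc.hyps in \<open>auto intro: has_derivative_add\<close>)
qed

lemma Ck_cmul: "Ck k f \<Longrightarrow> Ck k (\<lambda>v. c * f v)"
proof (induct k arbitrary: f)
  case 0
  then show ?case by (auto intro: continuous_intros)
next
  case (Suc k)
  from Suc.prems obtain f' where f: "\<forall>v. (f has_derivative f' v) (at v)" "\<forall>h. Ck k (\<lambda>v. f' v h)" by auto
  show ?case
    unfolding Ck.simps by (rule exI[of _ "\<lambda>v h. c * f' v h"]) (use f Suc.hyps in \<open>auto intro: has_derivative_mult_right\<close>)
qed

lemma Ck_0: "Ck k (\<lambda>v. 0)"
proof (induct k)
  case 0
  then show ?case by auto
next
  case (Suc k)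
  show ?case
    unfolding Ck.simps by (rule exI[of _ "\<lambda>v h. 0"]) (use Suc in auto)
qed

lemma Ck_sum: "finite A \<Longrightarrow> (\<And>j. j \<in> A \<Longrightarrow> Ck k (g j)) \<Longrightarrow> Ck k (\<lambda>v. \<Sum>j\<in>A. g j v)"
proof (induct A rule: finite_induct)
  case empty
  then show ?case using Ck_0 by simp
next
  case (insert x F)
  then show ?case by (simp add: Ck_add)
qed

lemma Ck_F: "Ck k (\<lambda>v::real^'n::finite. delta (-v) a)"
proof (induct k arbitrary: a)
  case 0
  have "continuous_on UNIV (\<lambda>v::real^'n. delta (-v) a)"
    by (rule continuous_at_imp_continuous_on) (use F_deriv has_derivative_continuous in blast)
  then show ?case by simp
next
  case (Suc k)
  show ?case
  unfolding Ck.simps proof (rule exI[of _ "\<lambda>v h. \<Sum>j\<in>UNIV. complex_of_real (h $ j) * (- rmult (lbas j) (delta (-v)) a)"], intro conjI allI)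
    fix v :: "real^'n"
    show "((\<lambda>v. delta (- v) a) has_derivative (\<lambda>h. \<Sum>j\<in>UNIV. complex_of_real (h $ j) * (- rmult (lbas j) (delta (-v)) a))) (at v)"
      by (rule F_deriv)
  next
    fix h :: "real^'n"
    show "Ck k (\<lambda>v. \<Sum>j\<in>UNIV. complex_of_real (h $ j) * (- rmult (lbas j) (delta (-v)) a))"
    proof (rule Ck_sum, simp, rule Ck_cmul)
      fix j
      show "Ck k (\<lambda>v. - rmult (lbas j) (delta (-v)) a)"
      proof (cases "1 \<le> a j")
        case True
        then show ?thesis using Ck_cmul[OF Suc, of "-1"] by (simp add: rmult_lbas)
      next
        case False
        then show ?thesis using Ck_0 by (simp add: rmult_lbas)
      qed
    qed
  qed
qed

lemma F_mult: "mult_triv_on S (\<lambda>v::real^'n::finite. delta (-v))"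
  unfolding mult_triv_on_def
proof (intro conjI ballI)
  fix v l :: "real^'n"
  have e: "- l + - v = - (v + l)" by simp
  show "delta (- (v + l)) = rmult (delta (- l)) (delta (- v))" using delta_add[of "-l" "-v"] unfolding e .
next
  fix v w :: "real^'n"
  have e: "- v + - w = - (v + w)" by simp
  show "delta (- (v + w)) = rmult (delta (- v)) (delta (- w))" using delta_add[of "-v" "-w"] unfolding e .
next
  fix v :: "real^'n"
  show "delta (- v) (\<lambda>i. 0) = 1" by (rule delta0)
qed

lemma neg_pow: "(- (c * x::'a::comm_ring_1))^k = c^k * (-x)^k"
  by (metis mult_minus_right power_mult_distrib)

lemma F_mulN: "delta (- (of_nat N *\<^sub>R v)) = mulN N (delta (- (v::real^'n::finite)))"
  unfolding delta_def mulN_def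
  by (simp add: fun_eq_iff power_sum prod.distrib[symmetric] neg_pow)

theorem mainTheorem13:
  "\<exists>F :: real^'n::finite \<Rightarrow> 'n rser.
     mult_triv_on UNIV F \<and> cont_triv F
   \<and> (\<forall>G. mult_triv_on UNIV G \<and> cont_triv G \<longrightarrow> G = F)
   \<and> (\<forall>a. Cinf (\<lambda>v. F v a))
   \<and> (\<forall>N::nat. N > 0 \<longrightarrow> (\<forall>v. F (of_nat N *\<^sub>R v) = mulN N (F v)))
   \<and> (\<forall>v a. ((\<lambda>w. F w a) has_derivative
          (\<lambda>h. \<Sum>j\<in>UNIV. complex_of_real (h $ j) * (- rmult (lbas j) (F v) a))) (at v))
   \<and> (\<forall>G. mult_triv_on tors_lift G \<longrightarrow> (\<forall>v\<in>tors_lift. G v = F v))"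
proof (rule exI[of _ "\<lambda>v. delta (-v)"], intro conjI allI impI)
  show "mult_triv_on UNIV (\<lambda>v::real^'n. delta (-v))" by (rule F_mult)
  show "cont_triv (\<lambda>v::real^'n. delta (-v))"
    unfolding cont_triv_def using Ck_F[of 0] by auto
  show "Cinf (\<lambda>v::real^'n. delta (-v) a)" for a
    unfolding Cinf_def using Ck_F by blast
  show "delta (- (of_nat N *\<^sub>R v)) = mulN N (delta (- (v::real^'n)))" for N v
    by (rule F_mulN)
  show "((\<lambda>w. delta (-w) a) has_derivative
          (\<lambda>h. \<Sum>j\<in>UNIV. complex_of_real (h $ j) * (- rmult (lbas j) (delta (-v)) a))) (at v)"
    for v :: "real^'n" and a
    by (rule F_deriv)
next
  fix G :: "real^'n \<Rightarrow> 'n rser"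
  assume "mult_triv_on UNIV G \<and> cont_triv G"
  then have G: "mult_triv_on UNIV G" and Gc: "cont_triv G" by auto
  have "\<forall>v\<in>UNIV. G v = delta (-v)"
  proof (rule agree[OF G F_mult, where Q = "continuous_on UNIV"])
    fix a
    have "continuous_on UNIV (\<lambda>v::real^'n. delta (-v) a)" using Ck_F[of 0] by simp
    then show "continuous_on UNIV (\<lambda>v. G v a - delta (-v) a)"
      using Gc unfolding cont_triv_def by (intro continuous_on_diff) auto
  next
    fix D :: "real^'n \<Rightarrow> complex"
    assume "continuous_on UNIV D" "\<forall>v\<in>UNIV. \<forall>w\<in>UNIV. D (v+w) = D v + D w"
      "\<forall>v\<in>UNIV. \<forall>l\<in>(latt::(real^'n) set). D (v+l) = D v"
    then show "\<forall>v\<in>UNIV. D v = 0" by (rule zero_cont)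
  qed
  then show "G = (\<lambda>v. delta (-v))" by auto
next
  fix G :: "real^'n \<Rightarrow> 'n rser"
  assume G: "mult_triv_on tors_lift G"
  show "\<forall>v\<in>tors_lift. G v = delta (-v)"
  proof (rule agree[OF G F_mult, where Q = "\<lambda>_. True"])
    fix D :: "real^'n \<Rightarrow> complex"
    assume "\<forall>v\<in>tors_lift. \<forall>w\<in>tors_lift. D (v+w) = D v + D w"
      "\<forall>v\<in>tors_lift. \<forall>l\<in>(latt::(real^'n) set). D (v+l) = D v"
    then show "\<forall>v\<in>tors_lift. D v = 0" by (rule zero_tors)
  qed simp
qed

end
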